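(* In $NOM$, writing $\phi\vee\psi$ for $\neg(\neg\phi\wedge\neg\psi)$ and $\phi\perp\!\!\!\perp\psi$ for $(\phi\rightarrow(\psi\rightarrow\phi))\wedge(\psi\rightarrow(\phi\rightarrow\psi))$, the following rule is derivable for every finite sequence $\Gamma$ and formulas $\phi,\psi$: from $\Gamma\vdash((\phi\wedge\psi)\vee(\phi\wedge\neg\psi))\vee((\neg\phi\wedge\psi)\vee(\neg\phi\wedge\neg\psi))$ infer $\Gamma\vdash\phi\perp\!\!\!\perp\psi$.
   Context: The propositional deductive system $NOM$: formulas are built from propositional letters using $\wedge$, $\rightarrow$, $\neg$. Sequents are $\phi_1,\ldots,\phi_n\vdash\psi$ ($n\ge0$) with antecedent a finite ordered sequence. With $\Gamma$ a finite possibly empty sequence of formulas and $\phi,\psi,\chi$ formulas, the rules of $NOM$ are: (assumption) $\Gamma,\phi\vdash\phi$; (cut) $\Gamma\vdash\phi$, $\Gamma,\phi\vdash\psi$ $\Rightarrow$ $\Gamma\vdash\psi$; (paste) $\Gamma\vdash\phi$, $\Gamma\vdash\psi$ $\Rightarrow$ $\Gamma,\phi\vdash\psi$; (compatible exchange) $\Gamma,\phi,\psi\vdash\phi$, $\Gamma,\phi,\psi\vdash\chi$, $\Gamma,\psi,\phi\vdash\psi$ $\Rightarrow$ $\Gamma,\psi,\phi\vdash\chi$; ($\wedge$-intro) $\Gamma\vdash\phi$, $\Gamma\vdash\psi$ $\Rightarrow$ $\Gamma\vdash\phi\wedge\psi$; ($\wedge$-elim) $\Gamma\vdash\phi\wedge\psi$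 $\Rightarrow$ $\Gamma\vdash\phi$ and $\Rightarrow$ $\Gamma\vdash\psi$; ($\rightarrow$-intro) $\Gamma,\phi\vdash\psi$ $\Rightarrow$ $\Gamma\vdash\phi\rightarrow\psi$; ($\rightarrow$-elim) $\Gamma\vdash\phi\rightarrow\psi$ $\Rightarrow$ $\Gamma,\phi\vdash\psi$; (excluded middle) $\Gamma,\phi\vdash\psi$, $\Gamma,\neg\phi\vdash\psi$ $\Rightarrow$ $\Gamma\vdash\psi$; (explosion) $\Gamma\vdash\neg\phi$ $\Rightarrow$ $\Gamma,\phi\vdash\psi$. A rule schema is derivable if in every instance its conclusion can be derived from its premises using these rules. *)

theory Defs
  imports Main
begin

datatype 'a form = Atom 'a | Conj "'a form" "'a form" | Imp "'a form" "'a form" | Neg "'a form"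

definition Disj :: "'a form \<Rightarrow> 'a form \<Rightarrow> 'a form" where
  "Disj p q = Neg (Conj (Neg p) (Neg q))"

definition Indep :: "'a form \<Rightarrow> 'a form \<Rightarrow> 'a form" where
  "Indep p q = Conj (Imp p (Imp q p)) (Imp q (Imp p q))"

type_synonym 'a sequent = "'a form list \<times> 'a form"

text \<open>Sequents derivable in NOM from a set H of premise sequents.
 The antecedent "Gamma, phi" is Gamma @ [phi].\<close>
inductive nom :: "'a sequent set \<Rightarrow> 'a sequent \<Rightarrow> bool" for H where
  hyp: "s \<in> H \<Longrightarrow> nom H s"
| assumption: "nom H (G @ [p], p)"
| cut: "nom H (G, p) \<Longrightarrow> nom H (G @ [p], q) \<Longrightarrow> nom H (G, q)"
| paste: "nom H (G, p) \<Longrightarrow> nom H (G, q) \<Longrightarrow> nom H (G @ [p], q)"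
| cexch: "nom H (G @ [p, q], p) \<Longrightarrow> nom H (G @ [p, q], r) \<Longrightarrow> nom H (G @ [q, p], q)
           \<Longrightarrow> nom H (G @ [q, p], r)"
| conjI: "nom H (G, p) \<Longrightarrow> nom H (G, q) \<Longrightarrow> nom H (G, Conj p q)"
| conjE1: "nom H (G, Conj p q) \<Longrightarrow> nom H (G, p)"
| conjE2: "nom H (G, Conj p q) \<Longrightarrow> nom H (G, q)"
| impI: "nom H (G @ [p], q) \<Longrightarrow> nom H (G, Imp p q)"
| impE: "nom H (G, Imp p q) \<Longrightarrow> nom H (G @ [p], q)"
| em: "nom H (G @ [p], q) \<Longrightarrow> nom H (G @ [Neg p], q) \<Longrightarrow> nom H (G, q)"
| explosion: "nom H (G, Neg p) \<Longrightarrow> nom H (G @ [p], q)"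

end

theory Submission
  imports Defs
begin

lemma asm: "nom H (G @ [p], p)" by (rule nom.assumption)

lemma cut': "nom H (G @ [a], p) \<Longrightarrow> nom H (G @ [a, p], q) \<Longrightarrow> nom H (G @ [a], q)"
  using nom.cut[of H "G @ [a]" p q] by simp

lemma paste': "nom H (G @ [a], p) \<Longrightarrow> nom H (G @ [a], q) \<Longrightarrow> nom H (G @ [a, p], q)"
  using nom.paste[of H "G @ [a]" p q] by simp

lemma expl': "nom H (G @ [a], Neg p) \<Longrightarrow> nom H (G @ [a, p], q)"
  using nom.explosion[of H "G @ [a]" p q] by simp

lemma impE': "nom H (G @ [a], Imp p q) \<Longrightarrow> nom H (G @ [a, p], q)"
  using nom.impE[of H "G @ [a]" p q] by simp

lemma em': "nom H (G @ [a, p], q) \<Longrightarrow> nom H (G @ [a, Neg p], q) \<Longrightarrow> nom H (G @ [a], q)"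
  using nom.em[of H "G @ [a]" p q] by simp

lemma negI: "nom H (G @ [p], Neg p) \<Longrightarrow> nom H (G, Neg p)"
  by (rule nom.em[of H G p], assumption, rule nom.assumption)

lemma MT: assumes "nom H (G, Neg Y)" "nom H (G @ [X], Y)" shows "nom H (G @ [X], z)"
proof -
  have a: "nom H (G @ [Y], Neg X)" using assms(1) by (rule nom.explosion)
  have b: "nom H (G @ [Y, X], Y)" using expl'[OF a] .
  have c: "nom H (G @ [Y, X], z)" using expl'[OF a] .
  have d: "nom H (G @ [X, Y], X)" using paste'[OF assms(2) asm] .
  have "nom H (G @ [X, Y], z)" using nom.cexch[OF b c d] .
  then show ?thesis using cut'[OF assms(2)] by blast
qed

lemma botneg: "(\<And>z. nom H (G @ [X], z)) \<Longrightarrow> nom H (G, Neg X)"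
  by (rule negI) blast

lemma NN: "nom H (G @ [r, Neg r], r)"
proof -
  have "nom H (G @ [Neg r, r], Neg (Neg r))" using expl'[OF asm[of H G "Neg r"]] .
  then have "nom H ((G @ [Neg r, r]) @ [Neg r], r)" by (rule nom.explosion)
  then have 1: "nom H (G @ [Neg r], Imp r (Imp (Neg r) r))"
    by (intro nom.impI) simp
  have dne: "nom H (G @ [Neg (Neg r)], r)"
    proof -
    have "nom H (G @ [Neg (Neg r), r], r)" using asm[of H "G @ [Neg (Neg r)]" r] by simp
    then show ?thesis using em'[OF _ expl'[OF asm[of H G "Neg (Neg r)"]]] by blast
  qed
  have 2: "nom H (G @ [Neg (Neg r)], Imp (Neg r) r)"
    using nom.impI[of H "G @ [Neg (Neg r)]" "Neg r" r] expl'[OF asm[of H G "Neg (Neg r)"]] by simp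
  have "nom H (G @ [Neg (Neg r), r], Imp (Neg r) r)" using paste'[OF dne 2] .
  then have 3: "nom H (G @ [Neg (Neg r)], Imp r (Imp (Neg r) r))"
    using nom.impI[of H "G @ [Neg (Neg r)]" r] by simp
  have "nom H (G, Imp r (Imp (Neg r) r))" by (rule nom.em[OF 1 3])
  then have "nom H (G @ [r], Imp (Neg r) r)" by (rule nom.impE)
  then show ?thesis by (rule impE')
qed

lemma contra: "nom H (G @ [r, Neg r], z)"
proof -
  have a: "nom H (G @ [Neg r, r], Neg r)" by (rule expl', rule asm)
  have b: "nom H (G @ [Neg r, r], z)" by (rule expl', rule asm)
  show ?thesis using nom.cexch[OF a b NN] .
qed

lemma DNI: "nom H (G @ [r], Neg (Neg r))"
  using negI[of H "G @ [r]"] contra[of H G r] by simp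

lemma DNE: "nom H (G @ [Neg (Neg r)], r)"
  proof -
    have "nom H (G @ [Neg (Neg r), r], r)" using asm[of H "G @ [Neg (Neg r)]" r] by simp
    then show ?thesis using em'[OF _ expl'[OF asm[of H G "Neg (Neg r)"]]] by blast
  qed

lemma DNI2: "nom H (G, r) \<Longrightarrow> nom H (G, Neg (Neg r))"
  by (rule nom.cut, assumption, rule DNI)

lemma NegMono: "nom H (G, Neg Z) \<Longrightarrow> nom H (G @ [W], Z) \<Longrightarrow> nom H (G, Neg W)"
  by (rule negI, rule MT)

lemma bot_ext: "(\<And>z. nom H (G, z)) \<Longrightarrow> nom H (G @ [a], z)"
  by (rule nom.explosion) blast

lemma TwoMT:
  assumes h: "nom H (G, Neg (Conj a b))" and c: "nom H (G @ [a, b], a)"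
  shows "nom H (G @ [a, b], z)"
proof -
  have cb: "\<And>z. nom H (G @ [Conj a b], z)" using h by (rule nom.explosion)
  have x2: "\<And>z. nom H (G @ [Conj a b, a], z)" using bot_ext[of H "G @ [Conj a b]"] cb by simp
  have x1: "nom H (G @ [Conj a b, a], Conj a b)" by (rule x2)
  have x3: "nom H (G @ [a, Conj a b], a)" using nom.conjE1[OF asm[of H "G @ [a]" "Conj a b"]] by simp
  have "\<And>z. nom H (G @ [a, Conj a b], z)" using nom.cexch[OF x1 x2 x3] .
  then have na: "nom H (G @ [a], Neg (Conj a b))" using botneg[of H "G @ [a]"] by simp
  have ab: "nom H (G @ [a, b], Conj a b)" using nom.conjI[of H "G @ [a, b]" a b] c asm[of H "G @ [a]" b] by simp
  show ?thesis using MT[OF na, of b] ab by simp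
qed

lemma DisjLe:
  assumes hX: "\<And>D. nom H (D @ [X], r)" and hY: "\<And>D. nom H (D @ [Y], r)"
    and h: "nom H (G, Disj X Y)"
  shows "nom H (G, r)"
proof -
  have nX: "nom H (G @ [Neg r], Neg X)"
    using NegMono[of H "G @ [Neg r]" r X] asm[of H G "Neg r"] hX[of "G @ [Neg r]"] by simp
  have nY: "nom H (G @ [Neg r], Neg Y)"
    using NegMono[of H "G @ [Neg r]" r Y] asm[of H G "Neg r"] hY[of "G @ [Neg r]"] by simp
  have c: "nom H (G @ [Neg r], Conj (Neg X) (Neg Y))" using nom.conjI[OF nX nY] .
  have h': "nom H (G, Neg (Conj (Neg X) (Neg Y)))" using h by (simp add: Disj_def)
  have "nom H (G @ [Neg r], r)" using MT[OF h' c] .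
  then show ?thesis using nom.em[OF asm] by blast
qed

lemma Lstar:
  assumes hX: "\<And>D. nom H (D @ [X], r)" and hY: "\<And>D. nom H (D @ [Y], Neg r)"
    and h: "nom H (G, Disj X Y)"
  shows "nom H (G @ [r], X)"
proof -
  have hXY: "\<And>D. nom H (D @ [X], Neg Y)"
  proof -
    fix D
    have "nom H (D @ [X], Neg (Neg r))" using DNI2[OF hX] .
    moreover have "nom H ((D @ [X]) @ [Y], Neg r)" by (rule hY)
    ultimately show "nom H (D @ [X], Neg Y)" by (rule NegMono)
  qed
  have b1: "nom H (G @ [Neg X, X, Neg Y], X)" using paste'[OF hXY asm[of H "G @ [Neg X]" X]] by simp
  have botx: "\<And>z. nom H (G @ [Neg X, X], z)" using expl'[OF asm[of H G "Neg X"]] .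
  have b2: "nom H (G @ [Neg X, X, Neg Y], Neg X)" using bot_ext[of H "G @ [Neg X, X]"] botx by simp
  have b3: "nom H (G @ [Neg X, Neg Y, X], Neg Y)" using hXY[of "G @ [Neg X, Neg Y]"] by simp
  have "nom H ((G @ [Neg X]) @ [Neg Y, X], Neg X)"
    using nom.cexch[of H "G @ [Neg X]" X "Neg Y" "Neg X"] b1 b2 b3 by simp
  then have "nom H ((G @ [Neg X, Neg Y]) @ [X], Neg X)" by simp
  then have comm: "nom H (G @ [Neg X, Neg Y], Neg X)"
    using nom.em[OF _ asm] by blast
  have h': "nom H (G, Neg (Conj (Neg X) (Neg Y)))" using h by (simp add: Disj_def)
  have bot: "\<And>z. nom H (G @ [Neg X, Neg Y], z)" using TwoMT[OF h' comm] .
  have c1: "nom H (G @ [X], Imp r X)" using nom.impI[of H "G @ [X]" r X] paste'[OF hX asm[of H G X]] by simp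
  have c2: "nom H (G @ [Neg X, Y], Imp r X)"
    using nom.impI[of H "G @ [Neg X, Y]" r X] nom.explosion[OF hY[of "G @ [Neg X]"], of X] by simp
  have c3: "nom H (G @ [Neg X, Neg Y], Imp r X)" by (rule bot)
  have c4: "nom H (G @ [Neg X], Imp r X)" using em'[OF c2 c3] .
  have "nom H (G, Imp r X)" using nom.em[OF c1 c4] .
  then show ?thesis by (rule nom.impE)
qed

theorem proposition4p14:
  fixes G :: "'a form list" and p q :: "'a form"
  shows "nom {(G, Disj (Disj (Conj p q) (Conj p (Neg q)))
                        (Disj (Conj (Neg p) q) (Conj (Neg p) (Neg q))))}
             (G, Indep p q)"
proof -
  define A where "A = Conj p q"
  define B where "B = Conj p (Neg q)"
  define C where "C = Conj (Neg p) q"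
  define E where "E = Conj (Neg p) (Neg q)"
  define P where "P = Disj A B"
  define Q where "Q = Disj C E"
  define H where "H = {(G, Disj (Disj (Conj p q) (Conj p (Neg q)))
                        (Disj (Conj (Neg p) q) (Conj (Neg p) (Neg q))))}"
  have hyp: "nom H (G, Disj P Q)" unfolding H_def P_def Q_def A_def B_def C_def E_def
    by (rule nom.hyp) simp
  have F1: "\<And>D. nom H (D @ [P], p)"
    unfolding P_def A_def B_def
    by (rule DisjLe[OF _ _ asm]) (rule nom.conjE1, rule asm)+
  have F2: "\<And>D. nom H (D @ [Q], Neg p)"
    unfolding Q_def C_def E_def
    by (rule DisjLe[OF _ _ asm]) (rule nom.conjE1, rule asm)+
  have F1': "\<And>D. nom H (D @ [P], Neg (Neg p))" using DNI2[OF F1] .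
  have sw: "nom H (G @ [Conj (Neg Q) (Neg P)], Conj (Neg P) (Neg Q))"
    by (rule nom.conjI, rule nom.conjE2, rule asm, rule nom.conjE1, rule asm)
  have hyp': "nom H (G, Disj Q P)"
    using NegMono[OF _ sw] hyp by (simp add: Disj_def)
  have Gp: "nom H (G @ [p], P)" using Lstar[OF F1 F2 hyp] .
  have Gnp: "nom H (G @ [Neg p], Q)" using Lstar[OF F2 F1' hyp'] .
  have Gpq: "nom H (G @ [p, q], p)"
  proof -
    have "nom H ((G @ [p]) @ [q], A)"
      using Gp unfolding P_def A_def B_def
      by (rule Lstar[rotated 2]) (rule nom.conjE2, rule asm)+
    then show ?thesis unfolding A_def using nom.conjE1 by fastforce
  qed
  have Gnpq: "nom H (G @ [Neg p, q], Neg p)"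
  proof -
    have "nom H ((G @ [Neg p]) @ [q], C)"
      using Gnp unfolding Q_def C_def E_def
      by (rule Lstar[rotated 2]) (rule nom.conjE2, rule asm)+
    then show ?thesis unfolding C_def using nom.conjE1 by fastforce
  qed
  have g1a: "nom H (G @ [p], Imp p (Imp q p))"
  proof -
    have "nom H (G @ [p], Imp q p)" using nom.impI[of H "G @ [p]" q p] Gpq by simp
    then have "nom H (G @ [p, p], Imp q p)" using paste'[OF asm] by blast
    then show ?thesis using nom.impI[of H "G @ [p]" p] by simp
  qed
  have g1b: "nom H (G @ [Neg p], Imp p (Imp q p))"
    using nom.impI[of H "G @ [Neg p]" p] expl'[of H G "Neg p" p "Imp q p"] asm[of H G "Neg p"] by simp
  have g1: "nom H (G, Imp p (Imp q p))" using nom.em[OF g1a g1b] .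
  have g2a: "nom H (G @ [p], Imp q (Imp p q))"
  proof -
    have "nom H (G @ [p, q, p], q)" using paste'[of H "G @ [p]" q p q] Gpq asm[of H "G @ [p]" q] by simp
    then show ?thesis using nom.impI[of H "G @ [p]" q] nom.impI[of H "G @ [p, q]" p q] by simp
  qed
  have g2b: "nom H (G @ [Neg p], Imp q (Imp p q))"
  proof -
    have "nom H (G @ [Neg p, q, p], q)" using expl'[of H "G @ [Neg p]" q p q] Gnpq by simp
    then show ?thesis using nom.impI[of H "G @ [Neg p]" q] nom.impI[of H "G @ [Neg p, q]" p q] by simp
  qed
  have g2: "nom H (G, Imp q (Imp p q))" using nom.em[OF g2a g2b] .
  have "nom H (G, Indep p q)" unfolding Indep_def using nom.conjI[OF g1 g2] .
  then show ?thesis unfolding H_def .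
qed

end
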